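(* Let $\ell\ge 2$, let $\mathcal F\subset\binom{[n]}{\ell}$ be an intersecting family, and let $x\in\bigcup_{F\in\mathcal F}F$. Then $|\mathcal F(x)|\geq \gamma_{\ell-1}(\mathcal F)+1$, with equality only if $\mathcal F(x)$ consists of $\gamma_{\ell-1}(\mathcal F)+1$ pairwise disjoint $(\ell-1)$-sets.
   Context: A family is intersecting if any two members intersect. $\mathcal F(x)=\{F\setminus\{x\}: x\in F\in\mathcal F\}$. For $S\subset[n]$, $\mathcal F(\overline S)=\{F\in\mathcal F: F\cap S=\emptyset\}$, and $\gamma_{\ell-1}(\mathcal F)=\min_{S\in\binom{[n]}{\ell-1}}|\mathcal F(\overline S)|$. *)

theory Defs
  imports Main
begin

definition intersecting :: "'a set set \<Rightarrow> bool" where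
  "intersecting \<F> \<longleftrightarrow> (\<forall>F\<in>\<F>. \<forall>G\<in>\<F>. F \<inter> G \<noteq> {})"

definition link :: "'a set set \<Rightarrow> 'a \<Rightarrow> 'a set set" where
  "link \<F> x = {F - {x} | F. F \<in> \<F> \<and> x \<in> F}"

definition avoid :: "'a set set \<Rightarrow> 'a set \<Rightarrow> 'a set set" where
  "avoid \<F> S = {F \<in> \<F>. F \<inter> S = {}}"

definition gamma :: "nat \<Rightarrow> nat \<Rightarrow> nat set set \<Rightarrow> nat" where
  "gamma n k \<F> = Min ((\<lambda>S. card (avoid \<F> S)) ` {S. S \<subseteq> {1..n} \<and> card S = k})"

end

theory Submission
  imports Defs
begin

lemma key:
  fixes n l :: nat and \<F> :: "nat set set" and x :: nat
  assumes l: "l \<ge> 2"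
    and fam: "\<forall>F\<in>\<F>. F \<subseteq> {1..n} \<and> card F = l"
    and int: "intersecting \<F>"
    and A1: "A1 \<in> link \<F> x"
  shows "gamma n (l - 1) \<F> \<le> card {A \<in> link \<F> x. A \<inter> A1 = {}}"
    and "{A \<in> link \<F> x. A \<inter> A1 = {}} \<subseteq> link \<F> x - {A1}"
    and "finite (link \<F> x)"
proof -
  obtain F1 where F1: "F1 \<in> \<F>" "x \<in> F1" "A1 = F1 - {x}" using A1 unfolding link_def by auto
  have finF: "finite \<F>"
  proof -
    have "\<F> \<subseteq> Pow {1..n}" using fam by blast
    thus ?thesis by (rule finite_subset) simp
  qed
  have finL: "finite (link \<F> x)"
  proof -
    have "link \<F> x \<subseteq> (\<lambda>F. F - {x}) ` \<F>" unfolding link_def by auto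
    thus ?thesis using finF finite_subset by blast
  qed
  show "finite (link \<F> x)" by (rule finL)
  have sF1: "F1 \<subseteq> {1..n}" and cF1: "card F1 = l" using F1(1) fam by blast+
  have fF1: "finite F1" using sF1 finite_subset by blast
  have cA1: "card A1 = l - 1" using F1(2,3) cF1 fF1 by (simp add: card_Diff_singleton)
  have sA1: "A1 \<subseteq> {1..n}" using F1(3) sF1 by blast
  have ne: "A1 \<noteq> {}" using cA1 l by auto
  show "{A \<in> link \<F> x. A \<inter> A1 = {}} \<subseteq> link \<F> x - {A1}" using ne by auto
  have sub: "avoid \<F> A1 \<subseteq> insert x ` {A \<in> link \<F> x. A \<inter> A1 = {}}"
  proof
    fix F assume F: "F \<in> avoid \<F> A1"
    hence FF: "F \<in> \<F>" "F \<inter> A1 = {}" unfolding avoid_def by auto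
    have "F \<inter> F1 \<noteq> {}" using int FF F1 unfolding intersecting_def by auto
    hence xF: "x \<in> F" using FF F1 by auto
    have "F - {x} \<in> {A \<in> link \<F> x. A \<inter> A1 = {}}" using FF xF unfolding link_def by auto
    moreover have "F = insert x (F - {x})" using xF by auto
    ultimately show "F \<in> insert x ` {A \<in> link \<F> x. A \<inter> A1 = {}}" by blast
  qed
  have "card (avoid \<F> A1) \<le> card (insert x ` {A \<in> link \<F> x. A \<inter> A1 = {}})"
    using sub finL by (intro card_mono) auto
  also have "\<dots> \<le> card {A \<in> link \<F> x. A \<inter> A1 = {}}" by (rule card_image_le) (use finL in auto)
  finally have c: "card (avoid \<F> A1) \<le> card {A \<in> link \<F> x. A \<inter> A1 = {}}" .
  have "gamma n (l - 1) \<F> \<le> card (avoid \<F> A1)"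
    unfolding gamma_def
  proof (rule Min_le)
    have "{S. S \<subseteq> {1..n} \<and> card S = l - 1} \<subseteq> Pow {1..n}" by blast
    hence "finite {S. S \<subseteq> {1..n} \<and> card S = l - 1}" by (rule finite_subset) simp
    thus "finite ((\<lambda>S. card (avoid \<F> S)) ` {S. S \<subseteq> {1..n} \<and> card S = l - 1})" by blast
    show "card (avoid \<F> A1) \<in> (\<lambda>S. card (avoid \<F> S)) ` {S. S \<subseteq> {1..n} \<and> card S = l - 1}"
      using sA1 cA1 by blast
  qed
  thus "gamma n (l - 1) \<F> \<le> card {A \<in> link \<F> x. A \<inter> A1 = {}}" using c by linarith
qed

theorem fact4p6:
  fixes n l :: nat and \<F> :: "nat set set" and x :: nat
  assumes "l \<ge> 2"
    and "\<forall>F\<in>\<F>. F \<subseteq> {1..n} \<and> card F = l"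
    and "intersecting \<F>"
    and "x \<in> \<Union>\<F>"
  shows "card (link \<F> x) \<ge> gamma n (l - 1) \<F> + 1 \<and>
         (card (link \<F> x) = gamma n (l - 1) \<F> + 1 \<longrightarrow>
           (\<forall>A\<in>link \<F> x. card A = l - 1) \<and>
           (\<forall>A\<in>link \<F> x. \<forall>B\<in>link \<F> x. A \<noteq> B \<longrightarrow> A \<inter> B = {}))"
proof -
  obtain F0 where F0: "F0 \<in> \<F>" "x \<in> F0" using assms(4) by auto
  have A0: "F0 - {x} \<in> link \<F> x" using F0 unfolding link_def by auto
  note k = key[OF assms(1-3) A0]
  have "card {A \<in> link \<F> x. A \<inter> (F0 - {x}) = {}} \<le> card (link \<F> x - {F0 - {x}})"
    using k(2,3) by (intro card_mono) auto
  also have "\<dots> = card (link \<F> x) - 1" using A0 k(3) by simp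
  finally have c1: "card {A \<in> link \<F> x. A \<inter> (F0 - {x}) = {}} \<le> card (link \<F> x) - 1" .
  have c0: "card (link \<F> x) > 0" using A0 k(3) card_gt_0_iff by blast
  have 1: "card (link \<F> x) \<ge> gamma n (l - 1) \<F> + 1"
    using k(1) c1 c0 by linarith
  have 2: "\<forall>A\<in>link \<F> x. card A = l - 1"
  proof
    fix A assume "A \<in> link \<F> x"
    then obtain F where F: "F \<in> \<F>" "x \<in> F" "A = F - {x}" unfolding link_def by blast
    have sF: "F \<subseteq> {1..n}" and cF: "card F = l" using F(1) assms(2) by blast+
    have "finite F" using sF finite_subset by blast
    thus "card A = l - 1" using F(2,3) cF by (simp add: card_Diff_singleton)
  qed
  have 3: "A \<inter> B = {}" if eq: "card (link \<F> x) = gamma n (l - 1) \<F> + 1"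
    and A: "A \<in> link \<F> x" and B: "B \<in> link \<F> x" and ne: "A \<noteq> B" for A B
  proof -
    note kk = key[OF assms(1-3) A]
    have "card (link \<F> x - {A}) = card (link \<F> x) - 1" using A kk(3) by simp
    hence "card (link \<F> x - {A}) \<le> card {C \<in> link \<F> x. C \<inter> A = {}}" using kk(1) eq by simp
    hence "{C \<in> link \<F> x. C \<inter> A = {}} = link \<F> x - {A}"
      using kk(2,3) by (intro card_seteq) auto
    thus ?thesis using B ne by blast
  qed
  show ?thesis
  proof (intro conjI impI)
    show "card (link \<F> x) \<ge> gamma n (l - 1) \<F> + 1" by (rule 1)
    show "\<forall>A\<in>link \<F> x. card A = l - 1" by (rule 2)
    assume eq: "card (link \<F> x) = gamma n (l - 1) \<F> + 1"
    show "\<forall>A\<in>link \<F> x. \<forall>B\<in>link \<F> x. A \<noteq> B \<longrightarrow> A \<inter> B = {}"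
    proof (intro ballI impI)
      fix A B assume "A \<in> link \<F> x" "B \<in> link \<F> x" "A \<noteq> B"
      from 3[OF eq this] show "A \<inter> B = {}" .
    qed
  qed
qed

end
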